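(* Let $X_n$ be the compactification degree of a simple two-dimensional lattice path chosen uniformly at random among the $4^n$ paths of length $n\ge1$. Then for $r\ge0$, \[ \mathbb{P}(X_n=r)=4^{r+1-n}\sum_{\lambda\ge0}\lambda(-1)^{\lambda-1}\bigg[\binom{2n-1}{n-\lambda2^r}-\binom{2n-1}{n-\lambda2^r-1}\bigg], \] and \[ \mathbb{E}X_n=4^{-n}\sum_{k\ge1}8k\big(2^{v_2(k)}-1\big)\bigg[\binom{2n-1}{n-k}-\binom{2n-1}{n-k-1}\bigg], \] where $v_2(k)$ is the largest $\nu$ such that $2^\nu$ divides $k$, and binomial coefficients with negative lower index are $0$.
   Context: A simple two-dimensional lattice path is a finite nonempty word over the steps $\{\uparrow,\rightarrow,\downarrow,\leftarrow\}$; its length is the number of steps. The reduction $\Phi_L(\ell)$ of a path $\ell$ of length $\ge2$: first, if the first step of $\ell$ is vertical, the entire path is rotated by $90^\circ$ clockwise; then, if the last step is horizontal, this last step alone is rotated by $90^\circ$ clockwise. The resulting path decomposes uniquely as $H_1V_1\cdots H_kV_k$ ($k\ge1$) with each $H_i$ a nonempty maximal run of horizontal steps and each $V_i$ a nonempty maximal run of vertical steps. Each block $H_iV_i$ is replaced by $\nearrow$, $\searrow$, $\swarrow$, $\nwarrow$ according as ($H_i$ starts with $\rightarrow$, $V_i$ with $\uparrow$), ($\rightarrow$, $\downarrow$), ($\leftarrow$, $\downarrow$), ($\leftarrow$, $\uparrow$); the diagonal path is then rotated by $45^\circ$ clockwise, giving $\Phi_L(\ell)$ of length $k$. The compactification degree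 $\mathrm{cdeg}(\ell)$ of a path of length $\ge1$ is the number $m\ge0$ such that $\Phi_L^m(\ell)$ consists of a single step. *)

theory Defs
  imports Complex_Main "HOL-Computational_Algebra.Primes"
begin

datatype step = U | R | D | L

fun is_horiz :: "step \<Rightarrow> bool" where
  "is_horiz R = True" | "is_horiz L = True" | "is_horiz U = False" | "is_horiz D = False"

abbreviation is_vert :: "step \<Rightarrow> bool" where
  "is_vert s \<equiv> \<not> is_horiz s"

fun rot :: "step \<Rightarrow> step" where
  "rot U = R" | "rot R = D" | "rot D = L" | "rot L = U"

text \<open>Decomposition H1 V1 ... Hk Vk into maximal runs; each block is recorded by the
  pair (first step of H_i, first step of V_i).\<close>
function blocks :: "step list \<Rightarrow> (step \<times> step) list" where
  "blocks [] = []"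
| "blocks (h # t) =
     (case dropWhile is_horiz t of
        [] \<Rightarrow> []
      | v # t' \<Rightarrow> (h, v) # blocks (dropWhile is_vert t'))"
  by pat_completeness auto
termination
proof (relation "measure length")
  fix h t v t'
  assume "dropWhile is_horiz t = v # t'"
  then have "length (v # t') \<le> length t" by (metis length_dropWhile_le)
  then show "(dropWhile is_vert t', h # t) \<in> measure length"
    using length_dropWhile_le[of is_vert t'] by simp
qed auto

text \<open>Block (H_i V_i) to diagonal step, followed by the 45 degree clockwise rotation:
  NE \<mapsto> R, SE \<mapsto> D, SW \<mapsto> L, NW \<mapsto> U.\<close>
fun block_dir :: "step \<times> step \<Rightarrow> step" where
  "block_dir (h, v) =
     (if h = R then (if v = U then R else D) else (if v = D then L else U))"

text \<open>The reduction Phi_L (meaningful for paths of length at least 2).\<close>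
definition PhiL :: "step list \<Rightarrow> step list" where
  "PhiL xs =
     (let ys = (if is_vert (hd xs) then map rot xs else xs);
          zs = (if is_horiz (last ys) then butlast ys @ [rot (last ys)] else ys)
      in map block_dir (blocks zs))"

definition cdeg :: "step list \<Rightarrow> nat" where
  "cdeg xs = (LEAST m. length ((PhiL ^^ m) xs) = 1)"

definition binz :: "nat \<Rightarrow> int \<Rightarrow> nat" where
  "binz m k = (if k < 0 then 0 else m choose nat k)"

end

theory Submission
  imports Defs "HOL-Computational_Algebra.Polynomial"
begin


definition pB :: "nat \<Rightarrow> real poly" where
  "pB n = [:-1,1:] * [:1,1:]^(2*n-1)"

definition bb :: "nat \<Rightarrow> nat \<Rightarrow> real" where
  "bb n j = coeff (pB n) (n+j)"

lemma coeff_lin_pow: "coeff ([:1,1:]^N :: real poly) m = real (N choose m)"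
proof (cases "m \<le> N")
  case True then show ?thesis using coeff_linear_poly_power[OF True, of 1 1] by simp
next
  case False
  have "degree ([:1,1:]^N :: real poly) \<le> N"
    using degree_power_le[of "[:1,1:]::real poly" N] by simp
  then show ?thesis using False by (simp add: coeff_eq_0 binomial_eq_0)
qed

lemma coeff_xm1: "coeff ([:-1,1:] * q :: real poly) (Suc m) = coeff q m - coeff q (Suc m)"
  by (simp add: algebra_simps)

lemma bb_formula:
  assumes "n \<ge> 1"
  shows "bb n j = real ((2*n-1) choose (n+j-1)) - real ((2*n-1) choose (n+j))"
proof -
  obtain m where m: "n + j = Suc m" using assms by (cases "n+j") auto
  show ?thesis unfolding bb_def pB_def m using coeff_xm1[of "[:1,1:]^(2*n-1)" m]
    by (simp add: coeff_lin_pow)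
qed

lemma coeff_x1: "coeff (q * [:1,1:] :: real poly) (Suc m) = coeff q m + coeff q (Suc m)"
  by (simp add: algebra_simps)

lemma pB_Suc: "n \<ge> 1 \<Longrightarrow> pB (Suc n) = pB n * [:1,1:] * [:1,1:]"
proof -
  assume "n \<ge> 1"
  then have "2 * Suc n - 1 = Suc (Suc (2*n-1))" by simp
  then show ?thesis unfolding pB_def by (simp only: power_Suc2 mult.assoc)
qed

lemma bb_rec:
  assumes "n \<ge> 1" "j \<ge> 1"
  shows "bb (Suc n) j = bb n (j-1) + 2 * bb n j + bb n (j+1)"
proof -
  obtain m where m: "n + j = Suc (Suc m)" using assms by (cases "n+j"; cases "n+j-1") auto
  have "bb (Suc n) j = coeff (pB n * [:1,1:] * [:1,1:]) (Suc (Suc (Suc m)))"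
    unfolding bb_def pB_Suc[OF assms(1)] using m by simp
  also have "\<dots> = coeff (pB n) (Suc m) + 2 * coeff (pB n) (Suc (Suc m)) + coeff (pB n) (Suc (Suc (Suc m)))"
    by (simp only: coeff_x1)
  moreover have "n + (j-1) = Suc m" "n + (j+1) = Suc (Suc (Suc m))" using m assms by auto
  ultimately show ?thesis unfolding bb_def using m by simp
qed

lemma bb_0: "n \<ge> 1 \<Longrightarrow> bb n 0 = 0"
proof -
  assume a: "n \<ge> 1"
  have "(2*n-1) choose (n-1) = (2*n-1) choose ((2*n-1) - (n-1))"
    by (rule binomial_symmetric) (use a in simp)
  also have "(2*n-1) - (n-1) = n" using a by simp
  finally show ?thesis using bb_formula[OF a, of 0] by simp
qed

lemma bb_big: "n \<ge> 1 \<Longrightarrow> j > n \<Longrightarrow> bb n j = 0"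
  by (simp add: bb_formula binomial_eq_0)

lemma bb_ext:
  assumes "n \<ge> 1" "K \<ge> n"
  shows "(\<Sum>l\<in>{1..K}. f l * bb n l) = (\<Sum>l\<in>{1..n}. f l * bb n l)"
  by (rule sum.mono_neutral_right) (use assms bb_big in auto)

lemma bb_shift:
  assumes n: "n \<ge> 1" and K: "K > n + 1" and g0: "g 0 = 0"
  shows "(\<Sum>l\<in>{1..K}. g l * bb (Suc n) l) =
         (\<Sum>l\<in>{1..K}. (g (l+1) + 2 * g l + g (l-1)) * bb n l)"
proof -
  obtain K' where K': "K = Suc K'" using K by (cases K) auto
  have E: "(\<Sum>l\<in>{1..K}. g l * bb (Suc n) l) =
        (\<Sum>l\<in>{1..K}. g l * bb n (l-1)) + (\<Sum>l\<in>{1..K}. 2 * g l * bb n l)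
         + (\<Sum>l\<in>{1..K}. g l * bb n (l+1))"
    by (simp add: bb_rec[OF n] sum.distrib[symmetric] algebra_simps)
  have A: "(\<Sum>l\<in>{1..K}. g l * bb n (l-1)) = (\<Sum>l\<in>{1..K}. g (l+1) * bb n l)"
  proof -
    have "(\<Sum>l\<in>{1..K}. g l * bb n (l-1)) = (\<Sum>l\<in>{0..K'}. g (Suc l) * bb n l)"
      unfolding K' using sum.shift_bounds_cl_Suc_ivl[of "\<lambda>l. g l * bb n (l-1)" 0 K'] by simp
    also have "\<dots> = (\<Sum>l\<in>{1..K'}. g (Suc l) * bb n l)"
      using sum.atLeast_Suc_atMost[of 0 K' "\<lambda>l. g (Suc l) * bb n l"] bb_0[OF n] by simp
    also have "\<dots> = (\<Sum>l\<in>{1..K}. g (l+1) * bb n l)"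
      unfolding K' using bb_big[OF n, of "Suc K'"] K K' by simp
    finally show ?thesis .
  qed
  have C: "(\<Sum>l\<in>{1..K}. g l * bb n (l+1)) = (\<Sum>l\<in>{1..K}. g (l-1) * bb n l)"
  proof -
    have "(\<Sum>l\<in>{1..K}. g (l-1) * bb n l) = (\<Sum>l\<in>{Suc 1..K}. g (l-1) * bb n l)"
      using sum.atLeast_Suc_atMost[of 1 K "\<lambda>l. g (l-1) * bb n l"] K g0 by simp
    also have "\<dots> = (\<Sum>l\<in>{1..K'}. g l * bb n (Suc l))"
      unfolding K' using sum.shift_bounds_cl_Suc_ivl[of "\<lambda>l. g (l-1) * bb n l" 1 K'] by simp
    also have "\<dots> = (\<Sum>l\<in>{1..K}. g l * bb n (l+1))"
      unfolding K' using bb_big[OF n, of "Suc (Suc K')"] K K' by simp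
    finally show ?thesis by simp
  qed
  show ?thesis unfolding E A C
    by (subst sum.distrib[symmetric])+ (rule sum.cong, simp_all add: algebra_simps)
qed

lemma bb_1_1: "bb (Suc 0) (Suc 0) = 1"
  using bb_formula[of 1 1] by simp

lemma DD:
  assumes "n \<ge> 1"
  shows "(\<Sum>l\<in>{1..n}. real l * (-1)^(l-1) * bb n l) = (if n = 1 then 1 else 0)"
proof (cases "n = 1")
  case True then show ?thesis by (simp add: bb_1_1)
next
  case False
  then obtain m where m: "n = Suc m" "m \<ge> 1" using assms by (cases n) auto
  let ?g = "\<lambda>l::nat. real l * (-1)^(l-1)"
  have "(\<Sum>l\<in>{1..n}. ?g l * bb n l) = (\<Sum>l\<in>{1..n+1}. ?g l * bb n l)"
    using bb_ext[OF assms, of "n+1" ?g] by simp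
  also have "\<dots> = (\<Sum>l\<in>{1..n+1}. (?g (l+1) + 2 * ?g l + ?g (l-1)) * bb m l)"
    unfolding m(1) by (rule bb_shift) (use m in auto)
  also have "\<dots> = 0"
  proof (rule sum.neutral, intro ballI)
    fix l assume "l \<in> {1..n+1}"
    then obtain t where t: "l = Suc t" by (cases l) auto
    show "(?g (l+1) + 2 * ?g l + ?g (l-1)) * bb m l = 0"
      unfolding t by (cases t) (auto simp: algebra_simps)
  qed
  finally show ?thesis using False by simp
qed

lemma MM:
  assumes "n \<ge> 1"
  shows "(\<Sum>l\<in>{1..n}. real l * bb n l) = 4^(n-1)"
  using assms
proof (induction n rule: dec_induct)
  case base then show ?case by (simp add: bb_1_1)
next
  case (step m)
  have "(\<Sum>l\<in>{1..Suc m}. real l * bb (Suc m) l) = (\<Sum>l\<in>{1..m+2}. real l * bb (Suc m) l)"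
    using bb_ext[of "Suc m" "m+2" real] by simp
  also have "\<dots> = (\<Sum>l\<in>{1..m+2}. (real (l+1) + 2 * real l + real (l-1)) * bb m l)"
    by (rule bb_shift) (use step in auto)
  also have "\<dots> = (\<Sum>l\<in>{1..m+2}. 4 * (real l * bb m l))"
    by (rule sum.cong) (auto simp: algebra_simps)
  also have "\<dots> = 4 * (\<Sum>l\<in>{1..m}. real l * bb m l)"
    using bb_ext[OF step(1), of "m+2" real] by (simp add: sum_distrib_left[symmetric])
  finally show ?case using step by (simp add: power_eq_if)
qed

definition pB' :: "nat \<Rightarrow> real poly" where
  "pB' i = [:-1,1:] * [:1,1:]^i"

lemma coeff_pcomp_sq: "coeff (pcompose (p::real poly) [:0,0,1:]) m = (if even m then coeff p (m div 2) else 0)"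
proof (induction p arbitrary: m rule: pCons_induct)
  case 0 then show ?case by simp
next
  case (pCons a p)
  have e: "pcompose (pCons a p) [:0,0,1:] = [:a:] + pCons 0 (pCons 0 (pcompose p [:0,0,1:]))"
    by (simp add: pcompose_pCons smult_one)
  show ?case
  proof (cases m)
    case 0 then show ?thesis by (simp add: e)
  next
    case (Suc m')
    show ?thesis
    proof (cases m')
      case 0 then show ?thesis using Suc by (simp add: e)
    next
      case (Suc m'')
      then show ?thesis using \<open>m = Suc m'\<close> pCons.IH[of m''] by (cases "even m''") (auto simp: e)
    qed
  qed
qed

lemma pcompose_pow: "pcompose (p ^ k) q = (pcompose p q) ^ k"
  by (induction k) (simp_all add: pcompose_mult pcompose_1)

lemma qi_eq: "[:-1,0,1:] * [:1,0,1:]^i = pcompose (pB' i) [:0,0,1:]"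
proof -
  have a: "pcompose [:-1,1:] [:0,0,1:] = ([:-1,0,1:] :: real poly)" by (simp add: pcompose_pCons)
  have b: "pcompose [:1,1:] [:0,0,1:] = ([:1,0,1:] :: real poly)" by (simp add: pcompose_pCons)
  show ?thesis unfolding pB'_def pcompose_mult pcompose_pow a b ..
qed

lemma pB_expand:
  assumes "n \<ge> 1"
  shows "pB n = (\<Sum>i\<le>n-1. of_nat ((n-1) choose i) * ([:-1,0,1:] * [:1,0,1:]^i) * monom (2^(n-1-i)) (n-1-i))"
proof -
  have pw: "\<And>e. ([:0,2:] :: real poly)^e = monom (2^e) e"
  proof -
    fix e :: nat
    have "([:0,2:] :: real poly) = monom 2 1" by (simp add: monom_Suc monom_0)
    then show "([:0,2:] :: real poly)^e = monom (2^e) e" by (simp add: monom_power)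
  qed
  have "2*n-1 = Suc (2*(n-1))" using assms by simp
  then have "pB n = ([:-1,1:] * [:1,1:]) * ([:1,1:]*[:1,1:])^(n-1)"
    unfolding pB_def by (simp only: power_Suc power_mult mult.assoc power2_eq_square)
  also have "[:-1,1:] * [:1,1:] = ([:-1,0,1:] :: real poly)" by simp
  also have "[:1,1:]*[:1,1:] = ([:1,0,1:] + [:0,2:] :: real poly)" by simp
  also have "([:1,0,1:] + [:0,2:] :: real poly)^(n-1) =
       (\<Sum>i\<le>n-1. of_nat ((n-1) choose i) * [:1,0,1:]^i * [:0,2:]^(n-1-i))"
    by (rule binomial_ring)
  finally show ?thesis by (simp add: pw sum_distrib_left algebra_simps)
qed

lemma bb_double:
  assumes n: "n \<ge> 1"
  shows "bb n (2*j) = (\<Sum>k\<in>{1..n}. 2^(n-2*k) * real ((n-1) choose (2*k-1)) * bb k j)"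
proof -
  define m where "m = n - 1"
  define F where "F i = real (m choose i) * 2^(m-i) * coeff (pcompose (pB' i) [:0,0,1:]) (2*j+1+i)" for i
  have "bb n (2*j) = (\<Sum>i\<le>m. F i)"
  proof -
    have "bb n (2*j) = (\<Sum>i\<le>m. coeff (of_nat (m choose i) * ([:-1,0,1:] * [:1,0,1:]^i) * monom (2^(m-i)) (m-i)) (n+2*j))"
      unfolding bb_def pB_expand[OF n] m_def by (simp add: coeff_sum)
    also have "\<dots> = (\<Sum>i\<le>m. F i)"
    proof (rule sum.cong[OF refl])
      fix i assume i: "i \<in> {..m}"
      have "n + 2*j = (2*j+1+i) + (m-i)" using i n unfolding m_def by auto
      then show "coeff (of_nat (m choose i) * ([:-1,0,1:] * [:1,0,1:]^i) * monom (2^(m-i)) (m-i)) (n+2*j) = F i"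
        unfolding F_def qi_eq
        by (simp add: mult.commute[of _ "monom _ _"] coeff_monom_mult coeff_smult of_nat_poly add_ac)
    qed
    finally show ?thesis .
  qed
  also have "\<dots> = (\<Sum>i\<in>{i. i \<le> m \<and> odd i}. F i)"
    by (rule sum.mono_neutral_right) (auto simp: F_def coeff_pcomp_sq)
  also have "\<dots> = (\<Sum>k\<in>{k. k \<in> {1..n} \<and> 2*k-1 \<le> m}. F (2*k-1))"
  proof (rule sum.reindex_cong[where l = "\<lambda>k. 2*k-1"])
    show "inj_on (\<lambda>k::nat. 2*k-1) {k. k \<in> {1..n} \<and> 2*k-1 \<le> m}"
      by (auto simp: inj_on_def)
    show "{i. i \<le> m \<and> odd i} = (\<lambda>k. 2*k-1) ` {k. k \<in> {1..n} \<and> 2*k-1 \<le> m}"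
    proof (intro equalityI subsetI)
      fix i assume "i \<in> {i. i \<le> m \<and> odd i}"
      then obtain t where t: "i = 2*t+1" "i \<le> m" by (auto elim: oddE)
      then show "i \<in> (\<lambda>k. 2*k-1) ` {k. k \<in> {1..n} \<and> 2*k-1 \<le> m}"
        unfolding m_def by (intro image_eqI[of _ _ "t+1"]) auto
    qed auto
  qed simp
  also have "\<dots> = (\<Sum>k\<in>{1..n}. 2^(n-2*k) * real ((n-1) choose (2*k-1)) * bb k j)"
  proof (rule sum.mono_neutral_cong_left)
    show "\<forall>k\<in>{1..n} - {k. k \<in> {1..n} \<and> 2*k-1 \<le> m}. 2^(n-2*k) * real ((n-1) choose (2*k-1)) * bb k j = 0"
      by (auto simp: m_def binomial_eq_0)
    fix k assume k: "k \<in> {k. k \<in> {1..n} \<and> 2*k-1 \<le> m}"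
    then have k1: "k \<ge> 1" "2*k \<le> n" unfolding m_def by auto
    have "even (2*j+1+(2*k-1))" using k1 by simp
    moreover have "(2*j+1+(2*k-1)) div 2 = k + j" using k1 by simp
    moreover have "pB' (2*k-1) = pB k" unfolding pB'_def pB_def by simp
    moreover have "m - (2*k-1) = n - 2*k" unfolding m_def using k1 by simp
    ultimately show "F (2*k-1) = 2^(n-2*k) * real ((n-1) choose (2*k-1)) * bb k j"
      unfolding F_def coeff_pcomp_sq bb_def m_def by (simp add: add_ac)
  qed auto
  finally show ?thesis .
qed



lemma step_UNIV: "(UNIV :: step set) = {U,R,D,L}"
  using step.exhaust by auto

instance step :: finite
  by standard (simp add: step_UNIV)

lemma card_step: "card (UNIV :: step set) = 4"
  by (simp add: step_UNIV)

lemma is_horiz_iff: "is_horiz s \<longleftrightarrow> s = R \<or> s = L"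
  by (cases s) auto

definition pre :: "step list \<Rightarrow> step list" where
  "pre xs =
     (let ys = (if is_vert (hd xs) then map rot xs else xs)
      in (if is_horiz (last ys) then butlast ys @ [rot (last ys)] else ys))"

lemma PhiL_pre: "PhiL xs = map block_dir (blocks (pre xs))"
  unfolding PhiL_def pre_def Let_def by simp

lemma blocks_hh: "is_horiz a \<Longrightarrow>
   blocks (s # a # t) = (case blocks (a # t) of [] \<Rightarrow> [] | p # r \<Rightarrow> (s, snd p) # r)"
proof -
  assume a: "is_horiz a"
  have d: "dropWhile is_horiz (a # t) = dropWhile is_horiz t" using a by simp
  show ?thesis
    by (cases "dropWhile is_horiz t") (simp_all only: blocks.simps d list.case snd_conv)
qed

lemma blocks_hv: "is_vert a \<Longrightarrow> blocks (s # a # t) = (s, a) # blocks (dropWhile is_vert t)"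
  by simp

lemma blocks_fst: "blocks (a # t) = p # r \<Longrightarrow> fst p = a"
  by (auto split: list.splits)

lemma blocks_valid: "z = [] \<or> is_horiz (hd z) \<Longrightarrow> \<forall>p\<in>set (blocks z). is_horiz (fst p) \<and> is_vert (snd p)"
proof (induction z rule: blocks.induct)
  case 1 then show ?case by simp
next
  case (2 h t)
  show ?case
  proof (cases "dropWhile is_horiz t")
    case Nil then show ?thesis by (simp only: blocks.simps Nil list.case) simp
  next
    case (Cons v t')
    have "is_vert v" using Cons by (metis dropWhile_eq_Cons_conv)
    moreover have "dropWhile is_vert t' = [] \<or> is_horiz (hd (dropWhile is_vert t'))"
      by (metis hd_dropWhile)
    ultimately show ?thesis using 2 Cons by auto
  qed
qed

lemma blocks_len: "2 * length (blocks z) \<le> length z"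
proof (induction z rule: blocks.induct)
  case 1 then show ?case by simp
next
  case (2 h t)
  show ?case
  proof (cases "dropWhile is_horiz t")
    case Nil then show ?thesis by (simp only: blocks.simps Nil list.case) simp
  next
    case (Cons v t')
    have "length (v # t') \<le> length t" by (metis Cons length_dropWhile_le)
    moreover have "length (dropWhile is_vert t') \<le> length t'" by (rule length_dropWhile_le)
    ultimately show ?thesis using 2 Cons by auto
  qed
qed

lemma blocks_ne: "z \<noteq> [] \<Longrightarrow> is_horiz (hd z) \<Longrightarrow> is_vert (last z) \<Longrightarrow> blocks z \<noteq> []"
proof -
  assume a: "z \<noteq> []" "is_horiz (hd z)" "is_vert (last z)"
  then obtain h t where z: "z = h # t" by (cases z) auto
  show ?thesis
  proof (cases "dropWhile is_horiz t")
    case Nil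
    then have "\<forall>x\<in>set t. is_horiz x" by (simp add: dropWhile_eq_Nil_conv)
    then show ?thesis using a z by (cases t rule: rev_cases) auto
  next
    case (Cons v t') then show ?thesis using z by simp
  qed
qed

definition TT :: "nat \<Rightarrow> nat \<Rightarrow> nat" where
  "TT N m = (N choose m) * 2^(N-m)"

lemma TT_Suc_Suc: "TT (Suc N) (Suc m) = 2 * TT N (Suc m) + TT N m"
proof (cases "Suc m \<le> N")
  case True
  then have "N - m = Suc (N - Suc m)" by simp
  then have "2^(N-m) = 2 * (2::nat)^(N - Suc m)" by simp
  then show ?thesis using True unfolding TT_def by (simp add: algebra_simps)
next
  case False
  then show ?thesis unfolding TT_def by (cases "m = N") (auto simp: binomial_eq_0)
qed

lemma TT_Suc_0: "TT (Suc N) 0 = 2 * TT N 0"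
  by (simp add: TT_def)

definition SH :: "nat \<Rightarrow> (step \<times> step) list \<Rightarrow> step list set" where
  "SH n ps = {z. length z = n \<and> z \<noteq> [] \<and> is_horiz (hd z) \<and> is_vert (last z) \<and> blocks z = ps}"

definition SV :: "nat \<Rightarrow> step \<Rightarrow> (step \<times> step) list \<Rightarrow> step list set" where
  "SV n v ps = {z. length z = n \<and> z \<noteq> [] \<and> hd z = v \<and> is_vert (last z) \<and> blocks (dropWhile is_vert z) = ps}"

lemma finite_len: "finite {z :: step list. length z = n}"
  using finite_lists_length_eq[of "UNIV :: step set" n] by simp

lemma finite_SH: "finite (SH n ps)"
  by (rule finite_subset[OF _ finite_len[of n]]) (auto simp: SH_def)

lemma finite_SV: "finite (SV n v ps)"
  by (rule finite_subset[OF _ finite_len[of n]]) (auto simp: SV_def)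

lemma SH_nil: "SH n [] = {}"
  unfolding SH_def using blocks_ne by auto

lemma SH_Suc:
  assumes n: "n \<ge> 1" and h: "is_horiz h" and v: "is_vert v"
  shows "SH (Suc n) ((h,v)#ps) = Cons h ` (SH n ((R,v)#ps) \<union> SH n ((L,v)#ps) \<union> SV n v ps)"
proof (intro equalityI subsetI)
  fix z assume "z \<in> SH (Suc n) ((h,v)#ps)"
  then have z: "length z = Suc n" "is_horiz (hd z)" "is_vert (last z)" "blocks z = (h,v)#ps"
    unfolding SH_def by auto
  then obtain s a t where zz: "z = s # a # t" using n by (cases z; cases "tl z") auto
  have s: "s = h" using blocks_fst[of s "a#t"] z(4) zz by simp
  show "z \<in> Cons h ` (SH n ((R,v)#ps) \<union> SH n ((L,v)#ps) \<union> SV n v ps)"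
  proof (cases "is_horiz a")
    case True
    have lz: "is_vert (last (a#t))" using z(3) zz by simp
    then obtain p r where pr: "blocks (a#t) = p # r" using blocks_ne[of "a#t"] True by (cases "blocks (a#t)") auto
    have "fst p = a" using blocks_fst[OF pr] .
    moreover have "snd p = v" "r = ps" using z(4) pr True unfolding zz blocks_hh[OF True] by auto
    ultimately have "blocks (a#t) = (a,v)#ps" using pr by (cases p) auto
    moreover have "a = R \<or> a = L" using True by (simp add: is_horiz_iff)
    ultimately have "a#t \<in> SH n ((R,v)#ps) \<union> SH n ((L,v)#ps)"
      using z(1) zz lz True unfolding SH_def by auto
    then show ?thesis using zz s by blast
  next
    case False
    have "a = v" "blocks (dropWhile is_vert t) = ps" using z(4) unfolding zz blocks_hv[OF False] by auto
    then have "a#t \<in> SV n v ps" using z(1) z(3) zz False unfolding SV_def by auto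
    then show ?thesis using zz s by blast
  qed
next
  fix z assume "z \<in> Cons h ` (SH n ((R,v)#ps) \<union> SH n ((L,v)#ps) \<union> SV n v ps)"
  then obtain z' where zz: "z = h # z'" and z': "z' \<in> SH n ((R,v)#ps) \<union> SH n ((L,v)#ps) \<union> SV n v ps"
    by auto
  have "z' \<noteq> []" "length z' = n" "is_vert (last z')" using z' unfolding SH_def SV_def by auto
  then obtain a t where at: "z' = a # t" by (cases z') auto
  have "blocks z = (h,v)#ps"
  proof (cases "is_horiz a")
    case True
    have "z' \<notin> SV n v ps" using True at v unfolding SV_def by auto
    with z' have "z' \<in> SH n ((R,v)#ps) \<union> SH n ((L,v)#ps)" by blast
    then have "blocks (a#t) = (R,v)#ps \<or> blocks (a#t) = (L,v)#ps" using at unfolding SH_def by auto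
    then show ?thesis unfolding zz at blocks_hh[OF True] by auto
  next
    case False
    then have "z' \<in> SV n v ps" using z' at unfolding SH_def by auto
    then have "a = v" "blocks (dropWhile is_vert t) = ps" using False at unfolding SV_def by auto
    then show ?thesis unfolding zz at blocks_hv[OF False] by auto
  qed
  then show "z \<in> SH (Suc n) ((h,v)#ps)"
    unfolding SH_def using zz h \<open>z' \<noteq> []\<close> \<open>length z' = n\<close> \<open>is_vert (last z')\<close> by auto
qed

lemma SV_Suc:
  assumes n: "n \<ge> 1" and v: "is_vert v"
  shows "SV (Suc n) v ps = Cons v ` (SV n U ps \<union> SV n D ps \<union> SH n ps)"
proof (intro equalityI subsetI)
  fix z assume "z \<in> SV (Suc n) v ps"
  then have z: "length z = Suc n" "hd z = v" "is_vert (last z)" "blocks (dropWhile is_vert z) = ps"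
    unfolding SV_def by auto
  then obtain a t where zz: "z = v # a # t" using n by (cases z; cases "tl z") auto
  show "z \<in> Cons v ` (SV n U ps \<union> SV n D ps \<union> SH n ps)"
  proof (cases "is_horiz a")
    case True
    then have "a#t \<in> SH n ps" using z zz v unfolding SH_def by auto
    then show ?thesis using zz by blast
  next
    case False
    then have "a = U \<or> a = D" by (cases a) auto
    then have "a#t \<in> SV n U ps \<union> SV n D ps" using z zz v False unfolding SV_def by auto
    then show ?thesis using zz by blast
  qed
next
  fix z assume "z \<in> Cons v ` (SV n U ps \<union> SV n D ps \<union> SH n ps)"
  then obtain z' where zz: "z = v # z'" and z': "z' \<in> SV n U ps \<union> SV n D ps \<union> SH n ps" by auto
  have "z' \<noteq> []" "length z' = n" "is_vert (last z')" using z' unfolding SH_def SV_def by auto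
  moreover have "blocks (dropWhile is_vert z) = ps"
  proof -
    obtain a t where at: "z' = a # t" using \<open>z' \<noteq> []\<close> by (cases z') auto
    show ?thesis
    proof (cases "is_horiz a")
      case True
      have "z' \<notin> SV n U ps \<union> SV n D ps" using True at unfolding SV_def by auto
      with z' have "z' \<in> SH n ps" by blast
      then show ?thesis using v True unfolding zz at SH_def by simp
    next
      case False
      have "z' \<notin> SH n ps" using False at unfolding SH_def by auto
      with z' have "z' \<in> SV n U ps \<union> SV n D ps" by blast
      then show ?thesis using v False unfolding zz at SV_def by auto
    qed
  qed
  ultimately show "z \<in> SV (Suc n) v ps" unfolding SV_def using zz by auto
qed

definition valid :: "(step \<times> step) list \<Rightarrow> bool" where
  "valid ps = (\<forall>p\<in>set ps. is_horiz (fst p) \<and> is_vert (snd p))"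

lemma card_SH_SV:
  assumes "n \<ge> 1"
  shows "\<forall>ps v. valid ps \<longrightarrow> is_vert v \<longrightarrow>
           card (SH n ps) = (if ps = [] then 0 else TT (n-1) (2 * length ps - 1)) \<and>
           card (SV n v ps) = TT (n-1) (2 * length ps)"
  using assms
proof (induction n rule: dec_induct)
  case base
  show ?case
  proof (intro allI impI conjI)
    fix ps :: "(step \<times> step) list" and v assume "valid ps" "is_vert v"
    have "SH 1 ps = {}" unfolding SH_def by (auto simp: length_Suc_conv)
    then show "card (SH 1 ps) = (if ps = [] then 0 else TT (1-1) (2 * length ps - 1))"
      by (cases ps) (auto simp: TT_def)
    have "SV 1 v ps = (if ps = [] then {[v]} else {})"
      unfolding SV_def using \<open>is_vert v\<close> by (auto simp: length_Suc_conv)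
    then show "card (SV 1 v ps) = TT (1-1) (2 * length ps)" by (auto simp: TT_def)
  qed
next
  case (step n)
  show ?case
  proof (intro allI impI conjI)
    fix ps :: "(step \<times> step) list" and v assume vp: "valid ps" and v: "is_vert v"
    show "card (SH (Suc n) ps) = (if ps = [] then 0 else TT (Suc n - 1) (2 * length ps - 1))"
    proof (cases ps)
      case Nil then show ?thesis by (simp add: SH_nil)
    next
      case (Cons p ps')
      obtain h v' where p: "p = (h,v')" by (cases p)
      have hv: "is_horiz h" "is_vert v'" using vp Cons p unfolding valid_def by auto
      have vp': "valid ps'" using vp Cons unfolding valid_def by auto
      have "card (SH (Suc n) ps) = card (SH n ((R,v')#ps') \<union> SH n ((L,v')#ps') \<union> SV n v' ps')"
        unfolding Cons p SH_Suc[OF step(1) hv] by (rule card_image) simp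
      also have "\<dots> = card (SH n ((R,v')#ps')) + card (SH n ((L,v')#ps')) + card (SV n v' ps')"
      proof -
        have d1: "SH n ((R,v')#ps') \<inter> SH n ((L,v')#ps') = {}" unfolding SH_def by auto
        have d2: "(SH n ((R,v')#ps') \<union> SH n ((L,v')#ps')) \<inter> SV n v' ps' = {}"
          using hv unfolding SH_def SV_def by auto
        show ?thesis
          by (simp add: card_Un_disjoint[OF _ _ d2] card_Un_disjoint[OF _ _ d1] finite_SH finite_SV)
      qed
      also have "\<dots> = 2 * TT (n-1) (Suc (2 * length ps')) + TT (n-1) (2 * length ps')"
        using step(3) vp' hv unfolding valid_def by (simp add: is_horiz_iff)
      also have "\<dots> = TT (Suc n - 1) (2 * length ps - 1)"
        using TT_Suc_Suc[of "n-1" "2 * length ps'"] step(1) Cons by simp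
      finally show ?thesis using Cons by simp
    qed
    have "card (SV (Suc n) v ps) = card (SV n U ps \<union> SV n D ps \<union> SH n ps)"
      unfolding SV_Suc[OF step(1) v] by (rule card_image) simp
    also have "\<dots> = card (SV n U ps) + card (SV n D ps) + card (SH n ps)"
    proof -
      have d1: "SV n U ps \<inter> SV n D ps = {}" unfolding SV_def by auto
      have d2: "(SV n U ps \<union> SV n D ps) \<inter> SH n ps = {}" unfolding SH_def SV_def by auto
      show ?thesis
        by (simp add: card_Un_disjoint[OF _ _ d2] card_Un_disjoint[OF _ _ d1] finite_SH finite_SV)
    qed
    also have "\<dots> = 2 * TT (n-1) (2 * length ps) + (if ps = [] then 0 else TT (n-1) (2 * length ps - 1))"
      using step(3) vp v by (auto simp: is_horiz_iff)
    also have "\<dots> = TT (Suc n - 1) (2 * length ps)"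
    proof (cases ps)
      case Nil then show ?thesis using TT_Suc_0[of "n-1"] step(1) by simp
    next
      case (Cons p ps')
      then show ?thesis using TT_Suc_Suc[of "n-1" "2 * length ps - 1"] step(1) by simp
    qed
    finally show "card (SV (Suc n) v ps) = TT (Suc n - 1) (2 * length ps)" .
  qed
qed

fun rinv :: "step \<Rightarrow> step" where
  "rinv U = L" | "rinv R = U" | "rinv D = R" | "rinv L = D"

lemma rot_rinv[simp]: "rot (rinv s) = s" by (cases s) auto
lemma rinv_rot[simp]: "rinv (rot s) = s" by (cases s) auto
lemma comp_rot_rinv[simp]: "rot \<circ> rinv = id" by auto
lemma comp_rinv_rot[simp]: "rinv \<circ> rot = id" by auto
lemma map_rinv_rot[simp]: "map rinv (map rot xs) = xs" by (induction xs) auto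
lemma map_rot_rinv[simp]: "map rot (map rinv xs) = xs" by (induction xs) auto
lemma horiz_rinv[simp]: "is_horiz (rinv s) = (\<not> is_horiz s)" by (cases s) auto
lemma horiz_rot[simp]: "is_horiz (rot s) = (\<not> is_horiz s)" by (cases s) auto

definition Zs :: "nat \<Rightarrow> step list \<Rightarrow> bool" where
  "Zs n z = (length z = n \<and> z \<noteq> [] \<and> is_horiz (hd z) \<and> is_vert (last z))"

lemma hd_butlast_app: "length z \<ge> 2 \<Longrightarrow> hd (butlast z @ [x]) = hd z"
  by (cases z; cases "tl z") auto

lemma pre_shape:
  assumes "length xs = n" "n \<ge> 2"
  shows "Zs n (pre xs)"
proof -
  define ys where "ys = (if is_vert (hd xs) then map rot xs else xs)"
  have ys: "length ys = n" "is_horiz (hd ys)" using assms unfolding ys_def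
    by (cases xs; auto)+
  have p: "pre xs = (if is_horiz (last ys) then butlast ys @ [rot (last ys)] else ys)"
    unfolding pre_def ys_def Let_def by simp
  show ?thesis unfolding Zs_def p using ys assms by (auto simp: hd_butlast_app)
qed

lemma pre_fiber:
  assumes n: "n \<ge> 2" and z: "Zs n z"
  shows "card {xs. length xs = n \<and> pre xs = z} = 4"
proof -
  define y2 where "y2 = butlast z @ [rinv (last z)]"
  have zl: "length z = n" "z \<noteq> []" "is_horiz (hd z)" "is_vert (last z)" using z unfolding Zs_def by auto
  have y2: "length y2 = n" "hd y2 = hd z" "last y2 = rinv (last z)" "y2 \<noteq> []"
    using zl n unfolding y2_def by (auto simp: hd_butlast_app)
  have bz: "butlast y2 = butlast z" unfolding y2_def by simp
  have pz: "pre z = z" unfolding pre_def Let_def using zl by simp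
  have py2: "pre y2 = z" unfolding pre_def Let_def using zl y2 bz by simp
  have pz': "pre (map rinv z) = z" unfolding pre_def Let_def using zl pz by (simp add: hd_map)
  have py2': "pre (map rinv y2) = z" unfolding pre_def Let_def using zl y2 bz by (simp add: hd_map)
  have eq: "{xs. length xs = n \<and> pre xs = z} = {z, y2, map rinv z, map rinv y2}"
  proof (intro equalityI subsetI)
    fix xs assume "xs \<in> {xs. length xs = n \<and> pre xs = z}"
    then have xs: "length xs = n" "pre xs = z" by auto
    define ys where "ys = (if is_vert (hd xs) then map rot xs else xs)"
    have x: "xs = ys \<or> xs = map rinv ys" unfolding ys_def by auto
    have p: "z = (if is_horiz (last ys) then butlast ys @ [rot (last ys)] else ys)"
      using xs(2) unfolding pre_def ys_def Let_def by simp
    have yne: "ys \<noteq> []" using xs n unfolding ys_def by auto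
    have "ys = z \<or> ys = y2"
    proof (cases "is_horiz (last ys)")
      case True
      then have zz: "z = butlast ys @ [rot (last ys)]" using p by simp
      then have "butlast z = butlast ys" "last z = rot (last ys)" by simp_all
      then have "ys = y2" unfolding y2_def using yne by simp
      then show ?thesis ..
    next
      case False then show ?thesis using p by simp
    qed
    then show "xs \<in> {z, y2, map rinv z, map rinv y2}" using x by auto
  next
    fix xs assume "xs \<in> {z, y2, map rinv z, map rinv y2}"
    then show "xs \<in> {xs. length xs = n \<and> pre xs = z}" using pz py2 pz' py2' zl y2 by auto
  qed
  have d1: "z \<noteq> y2" using y2(3) zl(4) by (metis horiz_rinv)
  have d2: "z \<noteq> map rinv z" "z \<noteq> map rinv y2" "y2 \<noteq> map rinv z" "y2 \<noteq> map rinv y2"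
    using zl y2 by (metis hd_map horiz_rinv list.map_disc_iff)+
  have d3: "map rinv z \<noteq> map rinv y2" using d1 by (metis map_rot_rinv)
  show ?thesis unfolding eq using d1 d2 d3 by simp
qed

fun pairof :: "step \<Rightarrow> step \<times> step" where
  "pairof R = (R,U)" | "pairof D = (R,D)" | "pairof L = (L,D)" | "pairof U = (L,U)"

lemma block_dir_pairof[simp]: "block_dir (pairof d) = d" by (cases d) auto
lemma comp_block_dir_pairof[simp]: "block_dir \<circ> pairof = id" by auto

lemma valid_pairof: "valid (map pairof w)"
proof -
  have "\<And>d. is_horiz (fst (pairof d)) \<and> is_vert (snd (pairof d))" by (case_tac d) auto
  then show ?thesis unfolding valid_def by auto
qed

lemma map_block_dir_iff:
  "valid ps \<Longrightarrow> (map block_dir ps = w) = (ps = map pairof w)"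
proof (induction ps arbitrary: w)
  case Nil then show ?case by auto
next
  case (Cons p ps)
  obtain h v where p: "p = (h,v)" by (cases p)
  have hv: "is_horiz h" "is_vert v" using Cons.prems p unfolding valid_def by auto
  have vp: "valid ps" using Cons.prems unfolding valid_def by auto
  have e: "\<And>d. (block_dir (h,v) = d) = ((h,v) = pairof d)"
    using hv by (cases h; cases v; case_tac d; simp)
  show ?case
  proof (cases w)
    case Nil then show ?thesis by simp
  next
    case (Cons d w') then show ?thesis using Cons.IH[OF vp, of w'] e p by auto
  qed
qed

lemma PhiL_fiber:
  assumes n: "n \<ge> 2" and w: "w \<noteq> []"
  shows "card {xs. length xs = n \<and> PhiL xs = w} = 4 * TT (n-1) (2 * length w - 1)"
proof -
  let ?S = "SH n (map pairof w)"
  have eq: "{xs. length xs = n \<and> PhiL xs = w} = (\<Union>z\<in>?S. {xs. length xs = n \<and> pre xs = z})"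
  proof (intro equalityI subsetI)
    fix xs assume "xs \<in> {xs. length xs = n \<and> PhiL xs = w}"
    then have xs: "length xs = n" "map block_dir (blocks (pre xs)) = w" by (auto simp: PhiL_pre)
    have zs: "Zs n (pre xs)" using pre_shape[OF xs(1) n] .
    then have "valid (blocks (pre xs))" unfolding valid_def Zs_def using blocks_valid by blast
    then have "blocks (pre xs) = map pairof w" using xs(2) map_block_dir_iff by blast
    then have "pre xs \<in> ?S" using zs unfolding SH_def Zs_def by auto
    then show "xs \<in> (\<Union>z\<in>?S. {xs. length xs = n \<and> pre xs = z})" using xs by auto
  next
    fix xs assume "xs \<in> (\<Union>z\<in>?S. {xs. length xs = n \<and> pre xs = z})"
    then show "xs \<in> {xs. length xs = n \<and> PhiL xs = w}"
      unfolding SH_def by (auto simp: PhiL_pre)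
  qed
  have "card {xs. length xs = n \<and> PhiL xs = w} = (\<Sum>z\<in>?S. card {xs. length xs = n \<and> pre xs = z})"
    unfolding eq
    by (rule card_UN_disjoint) (auto simp: finite_SH intro: finite_subset[OF _ finite_len[of n]])
  also have "\<dots> = (\<Sum>z\<in>?S. 4)"
    by (rule sum.cong[OF refl], rule pre_fiber[OF n]) (auto simp: SH_def Zs_def)
  also have "\<dots> = 4 * card ?S" by simp
  also have "card ?S = TT (n-1) (2 * length w - 1)"
  proof -
    have "n \<ge> 1" using n by simp
    from card_SH_SV[OF this] have "card (SH n (map pairof w)) = (if map pairof w = [] then 0 else TT (n-1) (2 * length (map pairof w) - 1))"
      using valid_pairof[of w] by (metis is_horiz.simps(3))
    then show ?thesis using w by simp
  qed
  finally show ?thesis .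
qed

lemma PhiL_len:
  assumes "length xs = n" "n \<ge> 2"
  shows "length (PhiL xs) \<ge> 1" "2 * length (PhiL xs) \<le> n"
proof -
  have z: "Zs n (pre xs)" by (rule pre_shape[OF assms])
  then show "length (PhiL xs) \<ge> 1" unfolding PhiL_pre Zs_def using blocks_ne
    by (metis One_nat_def Suc_leI length_greater_0_conv length_map)
  show "2 * length (PhiL xs) \<le> n" unfolding PhiL_pre using blocks_len[of "pre xs"] z
    unfolding Zs_def by simp
qed

lemma sum_PhiL:
  fixes f :: "step list \<Rightarrow> real"
  assumes n: "n \<ge> 2"
  shows "(\<Sum>xs\<in>{xs. length xs = n}. f (PhiL xs)) =
         (\<Sum>k\<in>{1..n}. real (4 * TT (n-1) (2*k-1)) * (\<Sum>w\<in>{w. length w = k}. f w))"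
proof -
  let ?W = "\<Union>k\<in>{1..n}. {w :: step list. length w = k}"
  have fW: "finite ?W" using finite_len by auto
  have img: "PhiL ` {xs. length xs = n} \<subseteq> ?W"
    using PhiL_len n by fastforce
  have "(\<Sum>xs\<in>{xs. length xs = n}. f (PhiL xs)) =
        (\<Sum>w\<in>?W. \<Sum>xs\<in>{xs. xs \<in> {xs. length xs = n} \<and> PhiL xs = w}. f (PhiL xs))"
    by (rule sum.group[OF finite_len fW img, symmetric])
  also have "\<dots> = (\<Sum>w\<in>?W. real (4 * TT (n-1) (2 * length w - 1)) * f w)"
  proof (rule sum.cong[OF refl])
    fix w assume "w \<in> ?W"
    then have "w \<noteq> []" by auto
    have "(\<Sum>xs\<in>{xs. xs \<in> {xs. length xs = n} \<and> PhiL xs = w}. f (PhiL xs)) =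
          (\<Sum>xs\<in>{xs. length xs = n \<and> PhiL xs = w}. f w)" by (rule sum.cong) auto
    also have "\<dots> = real (card {xs. length xs = n \<and> PhiL xs = w}) * f w" by simp
    finally show "(\<Sum>xs\<in>{xs. xs \<in> {xs. length xs = n} \<and> PhiL xs = w}. f (PhiL xs)) =
          real (4 * TT (n-1) (2 * length w - 1)) * f w"
      using PhiL_fiber[OF n \<open>w \<noteq> []\<close>] by simp
  qed
  also have "\<dots> = (\<Sum>k\<in>{1..n}. \<Sum>w\<in>{w. length w = k}. real (4 * TT (n-1) (2 * length w - 1)) * f w)"
    by (rule sum.UNION_disjoint) (auto simp: finite_len)
  also have "\<dots> = (\<Sum>k\<in>{1..n}. real (4 * TT (n-1) (2*k-1)) * (\<Sum>w\<in>{w. length w = k}. f w))"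
    by (rule sum.cong[OF refl]) (simp add: sum_distrib_left)
  finally show ?thesis .
qed



lemma cdeg_exists: "length xs \<ge> 1 \<Longrightarrow> \<exists>m. length ((PhiL ^^ m) xs) = 1"
proof (induction "length xs" arbitrary: xs rule: less_induct)
  case less
  show ?case
  proof (cases "length xs = 1")
    case True then show ?thesis by (intro exI[of _ 0]) simp
  next
    case False
    then have n: "length xs \<ge> 2" using less.prems by simp
    have "length (PhiL xs) < length xs" "length (PhiL xs) \<ge> 1"
      using PhiL_len[OF refl n] by auto
    then obtain m where "length ((PhiL ^^ m) (PhiL xs)) = 1" using less.hyps by blast
    then show ?thesis by (intro exI[of _ "Suc m"]) (simp add: funpow_Suc_right del: funpow.simps)
  qed
qed

lemma cdeg_1: "length xs = 1 \<Longrightarrow> cdeg xs = 0"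
  unfolding cdeg_def by simp

lemma cdeg_Suc:
  assumes "length xs \<ge> 2"
  shows "cdeg xs = Suc (cdeg (PhiL xs))"
proof -
  obtain m where m: "length ((PhiL ^^ m) xs) = 1" using cdeg_exists[of xs] assms by auto
  have "cdeg xs = Suc (LEAST k. length ((PhiL ^^ Suc k) xs) = 1)"
    unfolding cdeg_def by (rule Least_Suc[where P = "\<lambda>k. length ((PhiL ^^ k) xs) = 1", OF m]) (use assms in simp)
  also have "(\<lambda>k. (PhiL ^^ Suc k) xs) = (\<lambda>k. (PhiL ^^ k) (PhiL xs))"
    by (simp add: funpow_Suc_right del: funpow.simps)
  finally show ?thesis unfolding cdeg_def by simp
qed

lemma card_len: "card {xs :: step list. length xs = n} = 4^n"
  using card_lists_length_eq[of "UNIV :: step set" n] by (simp add: card_step)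

definition cc :: "nat \<Rightarrow> nat \<Rightarrow> real" where
  "cc n r = real (card {xs :: step list. length xs = n \<and> cdeg xs = r})"

lemma card_filter_sum: "finite S \<Longrightarrow> real (card {x\<in>S. P x}) = (\<Sum>x\<in>S. if P x then 1 else 0)"
  by (simp add: sum.If_cases Int_def)

lemma cc_sum: "cc n r = (\<Sum>xs\<in>{xs. length xs = n}. if cdeg xs = r then 1 else 0)"
  unfolding cc_def using card_filter_sum[OF finite_len, of n "\<lambda>xs. cdeg xs = r"] by simp

lemma cc_0: "n \<ge> 1 \<Longrightarrow> cc n 0 = (if n = 1 then 4 else 0)"
proof -
  assume n: "n \<ge> 1"
  show ?thesis
  proof (cases "n = 1")
    case True
    then have e: "{xs :: step list. length xs = n \<and> cdeg xs = 0} = {xs. length xs = n}"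
      using cdeg_1 by auto
    show ?thesis unfolding cc_def e using True by (simp add: card_len)
  next
    case False
    then have e: "{xs :: step list. length xs = n \<and> cdeg xs = 0} = {}"
      using cdeg_Suc n by fastforce
    show ?thesis unfolding cc_def e using False by simp
  qed
qed

lemma cc_1_Suc: "cc 1 (Suc r) = 0"
proof -
  have e: "{xs :: step list. length xs = 1 \<and> cdeg xs = Suc r} = {}" using cdeg_1 by auto
  show ?thesis unfolding cc_def e by simp
qed

lemma cc_Suc:
  assumes n: "n \<ge> 2"
  shows "cc n (Suc r) = (\<Sum>k\<in>{1..n}. real (4 * TT (n-1) (2*k-1)) * cc k r)"
proof -
  have "cc n (Suc r) = (\<Sum>xs\<in>{xs. length xs = n}. (\<lambda>w. if cdeg w = r then 1 else 0) (PhiL xs))"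
    unfolding cc_sum by (rule sum.cong[OF refl]) (use cdeg_Suc n in auto)
  also have "\<dots> = (\<Sum>k\<in>{1..n}. real (4 * TT (n-1) (2*k-1)) * cc k r)"
    using sum_PhiL[OF n, of "\<lambda>w. if cdeg w = r then 1 else 0"] by (simp add: cc_sum)
  finally show ?thesis .
qed

lemma TT_eq: "k \<ge> 1 \<Longrightarrow> real (TT (n-1) (2*k-1)) = 2^(n-2*k) * real ((n-1) choose (2*k-1))"
proof -
  assume "k \<ge> 1"
  then have "n - 1 - (2*k-1) = n - 2*k" by simp
  then show ?thesis unfolding TT_def by simp
qed

definition form :: "nat \<Rightarrow> nat \<Rightarrow> real" where
  "form n r = 4^(r+1) * (\<Sum>l\<in>{1..n}. real l * (-1)^(l-1) * bb n (l*2^r))"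

lemma form_ext:
  assumes "k \<ge> 1" "k \<le> n"
  shows "(\<Sum>l\<in>{1..k}. f l * bb k (l*2^r)) = (\<Sum>l\<in>{1..n}. f l * bb k (l*2^r))"
proof (rule sum.mono_neutral_left)
  show "\<forall>l\<in>{1..n} - {1..k}. f l * bb k (l * 2 ^ r) = 0"
  proof
    fix l assume "l \<in> {1..n} - {1..k}"
    then have "l > k" by auto
    moreover have "l \<le> l * 2^r" by simp
    ultimately have "k < l * 2^r" by linarith
    then show "f l * bb k (l * 2 ^ r) = 0" using bb_big[OF assms(1)] by simp
  qed
qed (use assms in auto)

lemma main1: "n \<ge> 1 \<Longrightarrow> cc n r = form n r"
proof (induction r arbitrary: n)
  case 0
  then show ?case unfolding form_def using DD[OF 0] cc_0[OF 0] by simp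
next
  case (Suc r)
  show ?case
  proof (cases "n = 1")
    case True
    have "(1::nat) < 2^Suc r" by (rule one_less_power) auto
    then have "bb 1 (2^Suc r) = 0" by (intro bb_big) auto
    then show ?thesis unfolding True form_def cc_1_Suc by simp
  next
    case False
    then have n: "n \<ge> 2" using Suc.prems by simp
    let ?g = "\<lambda>l::nat. real l * (-1)^(l-1)"
    have "cc n (Suc r) = (\<Sum>k\<in>{1..n}. real (4 * TT (n-1) (2*k-1)) * form k r)"
      unfolding cc_Suc[OF n] by (rule sum.cong[OF refl]) (simp add: Suc.IH)
    also have "\<dots> = (\<Sum>k\<in>{1..n}. (\<Sum>l\<in>{1..n}. 4^(r+2) * ?g l * (2^(n-2*k) * real ((n-1) choose (2*k-1)) * bb k (l*2^r))))"
    proof (rule sum.cong[OF refl])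
      fix k assume k: "k \<in> {1..n}"
      have "form k r = 4^(r+1) * (\<Sum>l\<in>{1..n}. ?g l * bb k (l*2^r))"
        unfolding form_def using form_ext[of k n ?g r] k by simp
      then show "real (4 * TT (n-1) (2*k-1)) * form k r =
        (\<Sum>l\<in>{1..n}. 4^(r+2) * ?g l * (2^(n-2*k) * real ((n-1) choose (2*k-1)) * bb k (l*2^r)))"
        using TT_eq[of k n] k by (simp add: sum_distrib_left algebra_simps)
    qed
    also have "\<dots> = (\<Sum>l\<in>{1..n}. 4^(r+2) * ?g l * (\<Sum>k\<in>{1..n}. 2^(n-2*k) * real ((n-1) choose (2*k-1)) * bb k (l*2^r)))"
      by (subst sum.swap) (simp add: sum_distrib_left)
    also have "\<dots> = (\<Sum>l\<in>{1..n}. 4^(r+2) * ?g l * bb n (l * 2^Suc r))"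
    proof (rule sum.cong[OF refl])
      fix l
      have "l * 2^Suc r = 2 * (l*2^r::nat)" by simp
      then show "4^(r+2) * ?g l * (\<Sum>k\<in>{1..n}. 2^(n-2*k) * real ((n-1) choose (2*k-1)) * bb k (l*2^r)) =
            4^(r+2) * ?g l * bb n (l * 2^Suc r)"
        using bb_double[of n "l*2^r"] n by (simp add: mult_ac)
    qed
    also have "\<dots> = form n (Suc r)" unfolding form_def by (simp add: sum_distrib_left mult.assoc)
    finally show ?thesis .
  qed
qed

definition EE :: "nat \<Rightarrow> real" where
  "EE n = (\<Sum>xs\<in>{xs :: step list. length xs = n}. real (cdeg xs))"

definition ww :: "nat \<Rightarrow> real" where
  "ww k = 8 * real k * (2 ^ multiplicity (2::nat) k - 1)"

definition RR :: "nat \<Rightarrow> real" where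
  "RR n = (\<Sum>k\<in>{1..n}. ww k * bb n k)"

lemma sum_all:
  assumes n: "n \<ge> 2"
  shows "(\<Sum>k\<in>{1..n}. real (4 * TT (n-1) (2*k-1)) * 4^k) = 4^n"
  using sum_PhiL[OF n, of "\<lambda>_. 1"] by (simp add: card_len)

lemma EE_rec:
  assumes n: "n \<ge> 2"
  shows "EE n = 4^n + (\<Sum>k\<in>{1..n}. real (4 * TT (n-1) (2*k-1)) * EE k)"
proof -
  have "EE n = (\<Sum>xs\<in>{xs :: step list. length xs = n}. 1 + real (cdeg (PhiL xs)))"
    unfolding EE_def by (rule sum.cong[OF refl]) (use cdeg_Suc n in auto)
  also have "\<dots> = 4^n + (\<Sum>xs\<in>{xs :: step list. length xs = n}. real (cdeg (PhiL xs)))"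
    by (simp add: sum.distrib card_len)
  also have "(\<Sum>xs\<in>{xs :: step list. length xs = n}. real (cdeg (PhiL xs))) =
      (\<Sum>k\<in>{1..n}. real (4 * TT (n-1) (2*k-1)) * EE k)"
    using sum_PhiL[OF n, of "\<lambda>w. real (cdeg w)"] by (simp add: EE_def)
  finally show ?thesis .
qed

lemma EE_1: "EE 1 = 0"
  unfolding EE_def using cdeg_1 by simp

lemma RR_1: "RR 1 = 0"
  unfolding RR_def ww_def by simp

lemma sum_split2: "(\<Sum>k\<in>{1..2*(n::nat)}. (f k :: real)) = (\<Sum>j\<in>{1..n}. f (2*j-1) + f (2*j))"
proof (induction n)
  case 0 then show ?case by simp
next
  case (Suc n)
  have "{1..2 * Suc n} = insert (2*n+2) (insert (2*n+1) {1..2*n})" by auto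
  then have "(\<Sum>k\<in>{1..2*Suc n}. f k) = f (2*n+2) + f (2*n+1) + (\<Sum>k\<in>{1..2*n}. f k)"
    by simp
  then show ?case using Suc by simp
qed

lemma ww_odd: "odd k \<Longrightarrow> ww k = 0"
  unfolding ww_def by (simp add: not_dvd_imp_multiplicity_0)

lemma ww_even: "j \<ge> 1 \<Longrightarrow> ww (2*j) = 4 * ww j + 16 * real j"
proof -
  assume "j \<ge> 1"
  then have "multiplicity (2::nat) (2*j) = Suc (multiplicity 2 j)"
    by (intro multiplicity_times_same) auto
  then show ?thesis unfolding ww_def by (simp add: algebra_simps)
qed

lemma swap_double:
  assumes n: "n \<ge> 1"
  shows "(\<Sum>j\<in>{1..n}. f j * bb n (2*j)) =
         (\<Sum>k\<in>{1..n}. 2^(n-2*k) * real ((n-1) choose (2*k-1)) * (\<Sum>j\<in>{1..k}. f j * bb k j))"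
proof -
  have "(\<Sum>j\<in>{1..n}. f j * bb n (2*j)) =
        (\<Sum>j\<in>{1..n}. \<Sum>k\<in>{1..n}. f j * (2^(n-2*k) * real ((n-1) choose (2*k-1)) * bb k j))"
    by (simp add: bb_double[OF n] sum_distrib_left)
  also have "\<dots> = (\<Sum>k\<in>{1..n}. \<Sum>j\<in>{1..n}. (2^(n-2*k) * real ((n-1) choose (2*k-1))) * (f j * bb k j))"
    by (subst sum.swap) (simp add: mult_ac)
  also have "\<dots> = (\<Sum>k\<in>{1..n}. 2^(n-2*k) * real ((n-1) choose (2*k-1)) * (\<Sum>j\<in>{1..n}. f j * bb k j))"
    by (simp add: sum_distrib_left)
  also have "\<dots> = (\<Sum>k\<in>{1..n}. 2^(n-2*k) * real ((n-1) choose (2*k-1)) * (\<Sum>j\<in>{1..k}. f j * bb k j))"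
    by (rule sum.cong[OF refl]) (subst bb_ext, auto)
  finally show ?thesis .
qed

lemma RR_rec:
  assumes n: "n \<ge> 2"
  shows "RR n = 4^n + (\<Sum>k\<in>{1..n}. real (4 * TT (n-1) (2*k-1)) * RR k)"
proof -
  have n1: "n \<ge> 1" using n by simp
  have "RR n = (\<Sum>k\<in>{1..2*n}. ww k * bb n k)"
    unfolding RR_def using bb_ext[OF n1, of "2*n" ww] by simp
  also have "\<dots> = (\<Sum>j\<in>{1..n}. ww (2*j) * bb n (2*j))"
    unfolding sum_split2 by (rule sum.cong[OF refl]) (auto simp: ww_odd)
  also have "\<dots> = (\<Sum>j\<in>{1..n}. 4 * (ww j * bb n (2*j)) + 16 * (real j * bb n (2*j)))"
  proof (rule sum.cong[OF refl])
    fix j assume "j \<in> {1..n}"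
    then have "ww (2*j) = 4 * ww j + 16 * real j" by (intro ww_even) auto
    then show "ww (2*j) * bb n (2*j) = 4 * (ww j * bb n (2*j)) + 16 * (real j * bb n (2*j))"
      by (simp add: algebra_simps)
  qed
  also have "\<dots> = 4 * (\<Sum>j\<in>{1..n}. ww j * bb n (2*j)) + 16 * (\<Sum>j\<in>{1..n}. real j * bb n (2*j))"
    by (simp add: sum.distrib sum_distrib_left)
  also have "4 * (\<Sum>j\<in>{1..n}. ww j * bb n (2*j)) = (\<Sum>k\<in>{1..n}. real (4 * TT (n-1) (2*k-1)) * RR k)"
  proof -
    have "4 * (\<Sum>j\<in>{1..n}. ww j * bb n (2*j)) =
      (\<Sum>k\<in>{1..n}. 4 * (2^(n-2*k) * real ((n-1) choose (2*k-1)) * (\<Sum>j\<in>{1..k}. ww j * bb k j)))"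
      by (simp only: swap_double[OF n1] sum_distrib_left)
    also have "\<dots> = (\<Sum>k\<in>{1..n}. real (4 * TT (n-1) (2*k-1)) * RR k)"
    proof (rule sum.cong[OF refl])
      fix k assume "k \<in> {1..n}"
      then have "real (TT (n-1) (2*k-1)) = 2^(n-2*k) * real ((n-1) choose (2*k-1))" by (intro TT_eq) auto
      then show "4 * (2^(n-2*k) * real ((n-1) choose (2*k-1)) * (\<Sum>j\<in>{1..k}. ww j * bb k j)) =
          real (4 * TT (n-1) (2*k-1)) * RR k" unfolding RR_def by simp
    qed
    finally show ?thesis .
  qed
  also have "16 * (\<Sum>j\<in>{1..n}. real j * bb n (2*j)) = 4^n"
  proof -
    have e: "16 * (\<Sum>j\<in>{1..n}. real j * bb n (2*j)) =
      (\<Sum>k\<in>{1..n}. 16 * (2^(n-2*k) * real ((n-1) choose (2*k-1)) * (\<Sum>j\<in>{1..k}. real j * bb k j)))"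
      by (simp only: swap_double[OF n1] sum_distrib_left)
    have "16 * (\<Sum>j\<in>{1..n}. real j * bb n (2*j)) =
          (\<Sum>k\<in>{1..n}. real (4 * TT (n-1) (2*k-1)) * 4^k)"
      unfolding e
    proof (rule sum.cong[OF refl])
      fix k assume k: "k \<in> {1..n}"
      then have "(4::real)^k = 4 * 4^(k-1)" by (cases k) auto
      then show "16 * (2^(n-2*k) * real ((n-1) choose (2*k-1)) * (\<Sum>j\<in>{1..k}. real j * bb k j)) =
            real (4 * TT (n-1) (2*k-1)) * 4^k"
        using MM[of k] TT_eq[of k n] k by simp
    qed
    then show ?thesis using sum_all[OF n] by simp
  qed
  finally show ?thesis by simp
qed

lemma main2: "n \<ge> 1 \<Longrightarrow> EE n = RR n"
proof (induction n rule: less_induct)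
  case (less n)
  show ?case
  proof (cases "n = 1")
    case True then show ?thesis using EE_1 RR_1 by simp
  next
    case False
    then have n: "n \<ge> 2" using less.prems by simp
    have "(\<Sum>k\<in>{1..n}. real (4 * TT (n-1) (2*k-1)) * EE k) = (\<Sum>k\<in>{1..n}. real (4 * TT (n-1) (2*k-1)) * RR k)"
    proof (rule sum.cong[OF refl])
      fix k assume k: "k \<in> {1..n}"
      show "real (4 * TT (n-1) (2*k-1)) * EE k = real (4 * TT (n-1) (2*k-1)) * RR k"
      proof (cases "2*k-1 \<le> n-1")
        case True
        then have "k < n" using k n by simp
        then show ?thesis using less.IH k by simp
      next
        case False
        then show ?thesis by (simp add: TT_def binomial_eq_0)
      qed
    qed
    then show ?thesis using EE_rec[OF n] RR_rec[OF n] by simp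
  qed
qed



lemma bb_binz:
  assumes n: "n \<ge> 1"
  shows "bb n j = real (binz (2*n-1) (int n - int j)) - real (binz (2*n-1) (int n - int j - 1))"
proof -
  let ?N = "2*n-1"
  have f: "bb n j = real (?N choose (n+j-1)) - real (?N choose (n+j))" by (rule bb_formula[OF n])
  consider "j < n" | "j = n" | "j > n" by linarith
  then show ?thesis
  proof cases
    case 1
    have a: "int n - int j = int (n-j)" "int n - int j - 1 = int (n-j-1)" using 1 by auto
    have b: "?N choose (n+j-1) = ?N choose (n-j)"
      using binomial_symmetric[of "n+j-1" ?N] 1 by (simp add: algebra_simps)
    have c: "?N choose (n+j) = ?N choose (n-j-1)"
      using binomial_symmetric[of "n+j" ?N] 1 by (simp add: algebra_simps)
    have jn: "j < n" using 1 .
    have d: "nat (int n - int j) = n - j" "nat (int n - int j - 1) = n - j - 1"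
      "\<not> (int n - int j < 0)" "\<not> (int n - int j - 1 < 0)" using jn by arith+
    show ?thesis unfolding f binz_def b c d using jn by (simp; arith)
  next
    case 2
    have "n + j - 1 = 2*n-1" using 2 by simp
    then show ?thesis unfolding f binz_def using n 2 by (simp add: binomial_eq_0)
  next
    case 3
    then show ?thesis unfolding f binz_def using n by (simp add: binomial_eq_0)
  qed
qed

theorem corollary2:
  fixes n r :: nat
  assumes "n \<ge> 1"
  shows "(real (card {xs :: step list. length xs = n \<and> cdeg xs = r}) / 4 ^ n
           = 4 powi (int r + 1 - int n) *
             (\<Sum>l = 0..n. real l * (-1) ^ (l - 1) *
                (real (binz (2 * n - 1) (int n - int l * 2 ^ r))
                 - real (binz (2 * n - 1) (int n - int l * 2 ^ r - 1))))) \<and>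
         ((\<Sum>xs \<in> {xs :: step list. length xs = n}. real (cdeg xs)) / 4 ^ n
           = (1 / 4 ^ n) *
             (\<Sum>k = 1..n. 8 * real k * (2 ^ multiplicity (2::nat) k - 1) *
                (real (binz (2 * n - 1) (int n - int k))
                 - real (binz (2 * n - 1) (int n - int k - 1)))))"
proof
  have s1: "(\<Sum>l = 0..n. real l * (-1) ^ (l - 1) *
                (real (binz (2 * n - 1) (int n - int l * 2 ^ r))
                 - real (binz (2 * n - 1) (int n - int l * 2 ^ r - 1)))) =
        (\<Sum>l\<in>{1..n}. real l * (-1)^(l-1) * bb n (l*2^r))"
  proof -
    have "(\<Sum>l = 0..n. real l * (-1) ^ (l - 1) *
                (real (binz (2 * n - 1) (int n - int l * 2 ^ r))
                 - real (binz (2 * n - 1) (int n - int l * 2 ^ r - 1)))) =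
          (\<Sum>l = Suc 0..n. real l * (-1) ^ (l - 1) *
                (real (binz (2 * n - 1) (int n - int l * 2 ^ r))
                 - real (binz (2 * n - 1) (int n - int l * 2 ^ r - 1))))"
      by (subst sum.atLeast_Suc_atMost) simp_all
    also have "\<dots> = (\<Sum>l\<in>{1..n}. real l * (-1)^(l-1) * bb n (l*2^r))"
    proof (rule sum.cong)
      fix l
      have "int l * 2^r = int (l * 2^r)" by simp
      then show "real l * (-1) ^ (l - 1) *
                (real (binz (2 * n - 1) (int n - int l * 2 ^ r))
                 - real (binz (2 * n - 1) (int n - int l * 2 ^ r - 1))) =
            real l * (-1)^(l-1) * bb n (l*2^r)"
        using bb_binz[OF assms, of "l*2^r"] by simp
    qed simp
    finally show ?thesis .
  qed
  have p: "(4::real) powi (int r + 1 - int n) = 4^(r+1) / 4^n"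
  proof -
    have "int r + 1 - int n = int (r+1) - int n" by simp
    then show ?thesis using power_int_diff[of "4::real" "int (r+1)" "int n"]
      by (simp only: power_int_of_nat) simp
  qed
  show "real (card {xs :: step list. length xs = n \<and> cdeg xs = r}) / 4 ^ n
           = 4 powi (int r + 1 - int n) *
             (\<Sum>l = 0..n. real l * (-1) ^ (l - 1) *
                (real (binz (2 * n - 1) (int n - int l * 2 ^ r))
                 - real (binz (2 * n - 1) (int n - int l * 2 ^ r - 1))))"
    unfolding s1 p using main1[OF assms, of r] unfolding cc_def form_def by simp
  have s2: "(\<Sum>k = 1..n. 8 * real k * (2 ^ multiplicity (2::nat) k - 1) *
                (real (binz (2 * n - 1) (int n - int k))
                 - real (binz (2 * n - 1) (int n - int k - 1)))) = RR n"
    unfolding RR_def ww_def by (rule sum.cong[OF refl]) (simp add: bb_binz[OF assms])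
  show "(\<Sum>xs \<in> {xs :: step list. length xs = n}. real (cdeg xs)) / 4 ^ n
           = (1 / 4 ^ n) *
             (\<Sum>k = 1..n. 8 * real k * (2 ^ multiplicity (2::nat) k - 1) *
                (real (binz (2 * n - 1) (int n - int k))
                 - real (binz (2 * n - 1) (int n - int k - 1))))"
    unfolding s2 using main2[OF assms] unfolding EE_def by simp
qed


end
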